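(* For $s,t\in\mu_r$ and $v,w\in\mathcal{A}_r$: \[ y\diamond_s vz_t^\delta w=(y\diamond_s v)z_t^\delta w+vz_t^\delta(y\diamond_s w)+vz_t^\delta(z_s^\delta-z_t^\delta)w. \]
   Context: Fix $r\ge1$, $\mu_r$ the $r$th roots of unity, $\mathcal{A}_r=\mathbb{Q}\langle x,y_s\mid s\in\mu_r\rangle$ the free noncommutative polynomial algebra over $\mathbb{Q}$, $\mathcal{A}_1=\mathbb{Q}\langle x,y\rangle$ with $y=y_1$. Write $z=x+y_1$, $z_s=x+y_s$, $\delta(1)=0$, $\delta(s)=1$ ($s\ne1$), $z_s^\delta=x+\delta(s)y_s$, $z_{k,s}=x^{k-1}y_s$. Let $\varphi$ be the algebra automorphism of $\mathcal{A}_r$ with $\varphi(x)=z$, $\varphi(y_s)=\delta(s)y_s-y_1$. Every word is uniquely $z_{k_1,s_1}\cdots z_{k_l,s_l}x^a$ ($l,a\ge0$); define linear maps $\mathcal{I}(z_{k_1,s_1}\cdots z_{k_l,s_l}x^a)=z_{k_1,s_1}z_{k_2,s_1s_2}\cdots z_{k_l,s_1\cdots s_l}x^a$ and $M_s(z_{k_1,s_1}\cdots z_{k_l,s_l}x^a)=z_{k_1,ss_1}z_{k_2,s_2}\cdots z_{k_l,s_l}x^a$ (with $M_s(x^a)=x^a$), and $\psi_s=\varphi\circ\mathcal{I}\circ M_s$. Diamond product: for $s\in\mu_r$, $\diamond_s:\mathcal{A}_1\times\mathcal{A}_r\to\mathcal{A}_r$ is the $\mathbb{Q}$-bilinear map defined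 recursively on words by $1\diamond_s w=w$, $v\diamond_s1=\psi_s\varphi(v)$, and for $v\in\mathcal{A}_1$, $w\in\mathcal{A}_r$, $1\ne t\in\mu_r$: $vx\diamond_s wx=(v\diamond_s wx)x-(vy\diamond_s w)x$; $vy\diamond_s wx=(v\diamond_s wx)y+(vy\diamond_s w)x$; $vx\diamond_s wy=(v\diamond_s wy)x+(vx\diamond_s w)y$; $vy\diamond_s wy=(v\diamond_s wy)y-(vx\diamond_s w)y$; $vx\diamond_s wy_t=(v\diamond_s wy_t)x+(v\diamond_s wz_t)y_t-(vy\diamond_s w)y_t$; $vy\diamond_s wy_t=(v\diamond_s wy_t)y-(v\diamond_s wz_t)y_t+(vy\diamond_s w)y_t$. *)

theory Defs
  imports Complex_Main
begin

text \<open>Roots of unity are represented as complex numbers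
  s with s^r = 1. Words are lists of letters (left-to-right), and noncommutative
  polynomials are functions word => rat (finitely supported ones are the elements
  of the algebra; see Ar).\<close>

datatype letter = X | Y complex

type_synonym word = "letter list"
type_synonym poly = "word \<Rightarrow> rat"

definition mono :: "word \<Rightarrow> poly" where
  "mono w = (\<lambda>u. if u = w then 1 else 0)"

definition pone :: poly where "pone = mono []"

definition padd :: "poly \<Rightarrow> poly \<Rightarrow> poly" (infixl "+\<^sub>p" 65) where
  "P +\<^sub>p Q = (\<lambda>u. P u + Q u)"

definition psub :: "poly \<Rightarrow> poly \<Rightarrow> poly" (infixl "-\<^sub>p" 65) where
  "P -\<^sub>p Q = (\<lambda>u. P u - Q u)"

definition psc :: "rat \<Rightarrow> poly \<Rightarrow> poly" where
  "psc c P = (\<lambda>u. c * P u)"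

definition pmul :: "poly \<Rightarrow> poly \<Rightarrow> poly" (infixl "*\<^sub>p" 70) where
  "P *\<^sub>p Q = (\<lambda>u. \<Sum>i\<in>{0..length u}. P (take i u) * Q (drop i u))"

definition supp :: "poly \<Rightarrow> word set" where
  "supp P = {w. P w \<noteq> 0}"

definition lin :: "(word \<Rightarrow> poly) \<Rightarrow> poly \<Rightarrow> poly" where
  "lin f P = (\<lambda>u. \<Sum>w\<in>supp P. P w * f w u)"

definition bilin :: "(word \<Rightarrow> word \<Rightarrow> poly) \<Rightarrow> poly \<Rightarrow> poly \<Rightarrow> poly" where
  "bilin f P Q = (\<lambda>u. \<Sum>v\<in>supp P. \<Sum>w\<in>supp Q. P v * Q w * f v w u)"

definition roots_of_unity :: "nat \<Rightarrow> complex set" where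
  "roots_of_unity r = {s. s ^ r = 1}"

definition Ar :: "nat \<Rightarrow> poly set" where
  "Ar r = {P. finite (supp P) \<and>
     (\<forall>u\<in>supp P. \<forall>l\<in>set u. l = X \<or> (\<exists>a\<in>roots_of_unity r. l = Y a))}"

definition xp :: poly where "xp = mono [X]"
definition yp :: "complex \<Rightarrow> poly" where "yp s = mono [Y s]"
definition ypoly :: poly where "ypoly = yp 1"

definition delta :: "complex \<Rightarrow> rat" where
  "delta s = (if s = 1 then 0 else 1)"

definition zp :: "complex \<Rightarrow> poly" where "zp s = xp +\<^sub>p yp s"
definition zd :: "complex \<Rightarrow> poly" where "zd s = xp +\<^sub>p psc (delta s) (yp s)"

fun phi_letter :: "letter \<Rightarrow> poly" where
  "phi_letter X = zp 1"
| "phi_letter (Y s) = psc (delta s) (yp s) -\<^sub>p yp 1"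

fun phi_word :: "word \<Rightarrow> poly" where
  "phi_word [] = pone"
| "phi_word (a # w) = phi_letter a *\<^sub>p phi_word w"

definition phi :: "poly \<Rightarrow> poly" where "phi = lin phi_word"

fun Iacc :: "complex \<Rightarrow> word \<Rightarrow> word" where
  "Iacc c [] = []"
| "Iacc c (X # w) = X # Iacc c w"
| "Iacc c (Y t # w) = Y (c * t) # Iacc (c * t) w"

definition Iw :: "word \<Rightarrow> word" where "Iw = Iacc 1"

fun Mw :: "complex \<Rightarrow> word \<Rightarrow> word" where
  "Mw s [] = []"
| "Mw s (X # w) = X # Mw s w"
| "Mw s (Y t # w) = Y (s * t) # w"

definition psi :: "complex \<Rightarrow> poly \<Rightarrow> poly" where
  "psi s = lin (\<lambda>w. phi_word (Iw (Mw s w)))"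

definition rmul :: "poly \<Rightarrow> letter \<Rightarrow> poly" where
  "rmul P a = P *\<^sub>p mono [a]"

text \<open>drev s v w computes (rev v) diamond_s (rev w) on words; the lists are reversed
  so that the last letters appear as heads. Letters Y a with a \<noteq> 1 in the
  first argument do not occur in A_1 and are mapped to 0.\<close>
function drev :: "complex \<Rightarrow> word \<Rightarrow> word \<Rightarrow> poly" where
  "drev s [] w = mono (rev w)"
| "drev s (a # v) [] = psi s (phi (mono (rev (a # v))))"
| "drev s (X # v) (X # w) =
     rmul (drev s v (X # w)) X -\<^sub>p rmul (drev s (Y 1 # v) w) X"
| "drev s (Y a # v) (X # w) =
     (if a = 1 then rmul (drev s v (X # w)) (Y 1) +\<^sub>p rmul (drev s (Y 1 # v) w) X
      else (\<lambda>_. 0))"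
| "drev s (X # v) (Y b # w) =
     (if b = 1 then rmul (drev s v (Y 1 # w)) X +\<^sub>p rmul (drev s (X # v) w) (Y 1)
      else rmul (drev s v (Y b # w)) X
           +\<^sub>p rmul (drev s v (X # w) +\<^sub>p drev s v (Y b # w)) (Y b)
           -\<^sub>p rmul (drev s (Y 1 # v) w) (Y b))"
| "drev s (Y a # v) (Y b # w) =
     (if a = 1 then
        (if b = 1 then rmul (drev s v (Y 1 # w)) (Y 1) -\<^sub>p rmul (drev s (X # v) w) (Y 1)
         else rmul (drev s v (Y b # w)) (Y 1)
           -\<^sub>p rmul (drev s v (X # w) +\<^sub>p drev s v (Y b # w)) (Y b)
           +\<^sub>p rmul (drev s (Y 1 # v) w) (Y b))
      else (\<lambda>_. 0))"
  by pat_completeness auto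
termination
  by (relation "measure (\<lambda>(s, v, w). length v + length w)") auto

definition diamond_word :: "complex \<Rightarrow> word \<Rightarrow> word \<Rightarrow> poly" where
  "diamond_word s v w = drev s (rev v) (rev w)"

definition diamond :: "complex \<Rightarrow> poly \<Rightarrow> poly \<Rightarrow> poly" where
  "diamond s = bilin (diamond_word s)"

end

theory Submission
  imports Defs "HOL-Library.Function_Algebras"
begin


lemma padd_eq: "P +\<^sub>p Q = P + Q" by (simp add: padd_def fun_eq_iff)
lemma psub_eq: "P -\<^sub>p Q = P - Q" by (simp add: psub_def fun_eq_iff)


definition fin :: "poly \<Rightarrow> bool" where "fin P = finite (supp P)"

lemma supp_mono[simp]: "supp (mono w) = {w}" by (auto simp: supp_def mono_def)

lemma fin_0[simp]: "fin 0" by (simp add: fin_def supp_def)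
lemma fin_mono[simp]: "fin (mono w)" by (simp add: fin_def)
lemma fin_add[simp]: "fin P \<Longrightarrow> fin Q \<Longrightarrow> fin (P + Q)"
  unfolding fin_def by (rule finite_subset[of _ "supp P \<union> supp Q"]) (auto simp: supp_def)
lemma fin_diff[simp]: "fin P \<Longrightarrow> fin Q \<Longrightarrow> fin (P - Q)"
  unfolding fin_def by (rule finite_subset[of _ "supp P \<union> supp Q"]) (auto simp: supp_def)
lemma fin_uminus[simp]: "fin P \<Longrightarrow> fin (- P)"
  unfolding fin_def by (rule finite_subset[of _ "supp P"]) (auto simp: supp_def)
lemma fin_psc[simp]: "fin P \<Longrightarrow> fin (psc c P)"
  unfolding fin_def by (rule finite_subset[of _ "supp P"]) (auto simp: supp_def psc_def)

lemma supp_pmul: "supp (P *\<^sub>p Q) \<subseteq> (\<lambda>(a,b). a @ b) ` (supp P \<times> supp Q)"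
proof
  fix u assume "u \<in> supp (P *\<^sub>p Q)"
  then have "(\<Sum>i\<in>{0..length u}. P (take i u) * Q (drop i u)) \<noteq> 0"
    by (simp add: supp_def pmul_def)
  then obtain i where "P (take i u) * Q (drop i u) \<noteq> 0"
    using sum.neutral by (metis (mono_tags, lifting))
  then show "u \<in> (\<lambda>(a,b). a @ b) ` (supp P \<times> supp Q)"
    unfolding supp_def image_iff
    by (intro bexI[of _ "(take i u, drop i u)"]) auto
qed

lemma fin_pmul[simp]: "fin P \<Longrightarrow> fin Q \<Longrightarrow> fin (P *\<^sub>p Q)"
  unfolding fin_def by (rule finite_subset[OF supp_pmul]) auto

lemma pmul_add_left[simp]: "(P + Q) *\<^sub>p R = P *\<^sub>p R + Q *\<^sub>p R"
  by (simp add: pmul_def fun_eq_iff algebra_simps sum.distrib)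
lemma pmul_add_right[simp]: "R *\<^sub>p (P + Q) = R *\<^sub>p P + R *\<^sub>p Q"
  by (simp add: pmul_def fun_eq_iff algebra_simps sum.distrib)
lemma pmul_diff_left[simp]: "(P - Q) *\<^sub>p R = P *\<^sub>p R - Q *\<^sub>p R"
  by (simp add: pmul_def fun_eq_iff algebra_simps sum_subtractf)
lemma pmul_diff_right[simp]: "R *\<^sub>p (P - Q) = R *\<^sub>p P - R *\<^sub>p Q"
  by (simp add: pmul_def fun_eq_iff algebra_simps sum_subtractf)
lemma pmul_uminus_left[simp]: "(- P) *\<^sub>p R = - (P *\<^sub>p R)"
  by (simp add: pmul_def fun_eq_iff sum_negf)
lemma pmul_uminus_right[simp]: "R *\<^sub>p (- P) = - (R *\<^sub>p P)"
  by (simp add: pmul_def fun_eq_iff sum_negf)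
lemma pmul_psc_left[simp]: "(psc c P) *\<^sub>p R = psc c (P *\<^sub>p R)"
  by (simp add: pmul_def psc_def fun_eq_iff sum_distrib_left mult.assoc)
lemma pmul_psc_right[simp]: "R *\<^sub>p (psc c P) = psc c (R *\<^sub>p P)"
  by (simp add: pmul_def psc_def fun_eq_iff sum_distrib_left algebra_simps)
lemma pmul_0_left[simp]: "0 *\<^sub>p R = 0"
  by (simp add: pmul_def fun_eq_iff)
lemma pmul_0_right[simp]: "R *\<^sub>p 0 = 0"
  by (simp add: pmul_def fun_eq_iff)
lemma pmul_0_left'[simp]: "(\<lambda>_. 0) *\<^sub>p R = 0"
  by (simp add: pmul_def fun_eq_iff)
lemma pmul_0_right'[simp]: "R *\<^sub>p (\<lambda>_. 0) = 0"
  by (simp add: pmul_def fun_eq_iff)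

lemma pmul_mono[simp]: "mono a *\<^sub>p mono b = mono (a @ b)"
proof (rule ext)
  fix u
  show "(mono a *\<^sub>p mono b) u = mono (a @ b) u"
  proof (cases "u = a @ b")
    case True
    have "(mono a *\<^sub>p mono b) u = (\<Sum>i\<in>{0..length u}. if i = length a then 1 else 0)"
      unfolding pmul_def
    proof (intro sum.cong refl)
      fix i assume "i \<in> {0..length u}"
      then have il: "i \<le> length u" by simp
      show "mono a (take i u) * mono b (drop i u) = (if i = length a then 1 else 0)"
      proof (cases "i = length a")
        case True
        then show ?thesis using \<open>u = a @ b\<close> by (simp add: mono_def)
      next
        case False
        have "length (take i u) = i" using il by simp
        then have "take i u \<noteq> a" using False by metis
        then show ?thesis using False by (simp add: mono_def)
      qed
    qed
    also have "\<dots> = 1" using True by simp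
    finally show ?thesis using True by (simp add: mono_def)
  next
    case False
    have "(mono a *\<^sub>p mono b) u = (\<Sum>i\<in>{0..length u}. 0)"
      unfolding pmul_def mono_def using False
    proof (intro sum.cong refl)
      fix x
      have "\<not> (take x u = a \<and> drop x u = b)" using False append_take_drop_id by metis
      then show "(if take x u = a then 1 else 0) * (if drop x u = b then 1 else 0) = (0::rat)"
        by auto
    qed
    then show ?thesis using False by (simp add: mono_def)
  qed
qed

lemma psc_0[simp]: "psc 0 P = 0" by (simp add: psc_def fun_eq_iff)
lemma psc_1[simp]: "psc 1 P = P" by (simp add: psc_def fun_eq_iff)

lemma fin_induct[consumes 1, case_names zero step]:
  assumes "fin P" "Pr 0" "\<And>Q a c. fin Q \<Longrightarrow> Pr Q \<Longrightarrow> Pr (Q + psc c (mono a))"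
  shows "Pr P"
proof -
  have "\<forall>P. supp P \<subseteq> S \<longrightarrow> Pr P" if "finite S" for S
    using that
  proof (induction S rule: finite_induct)
    case empty
    { fix P assume "supp P \<subseteq> {}"
      then have "P = 0" by (auto simp: supp_def fun_eq_iff)
      then have "Pr P" using assms(2) by simp }
    then show ?case by blast
  next
    case (insert a S)
    { fix P assume P: "supp P \<subseteq> insert a S"
      define Q where "Q = P(a := 0)"
      have sQ: "supp Q \<subseteq> S" using P by (auto simp: Q_def supp_def)
      then have "Pr Q" using insert by blast
      moreover have "fin Q" using sQ insert(1) by (auto simp: fin_def intro: finite_subset)
      ultimately have "Pr (Q + psc (P a) (mono a))" using assms(3) by blast
      moreover have "Q + psc (P a) (mono a) = P"
        by (auto simp: Q_def psc_def mono_def fun_eq_iff)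
      ultimately have "Pr P" by simp }
    then show ?case by blast
  qed
  then show ?thesis using assms(1) fin_def by blast
qed

lemma pmul_assoc[simp]:
  assumes "fin P" "fin Q" "fin R"
  shows "(P *\<^sub>p Q) *\<^sub>p R = P *\<^sub>p (Q *\<^sub>p R)"
proof -
  have m: "(mono a *\<^sub>p Q) *\<^sub>p R = mono a *\<^sub>p (Q *\<^sub>p R)" for a
  proof -
    have mm: "(mono a *\<^sub>p mono b) *\<^sub>p R = mono a *\<^sub>p (mono b *\<^sub>p R)" for b
      by (rule fin_induct[of R "\<lambda>R. (mono a *\<^sub>p mono b) *\<^sub>p R = mono a *\<^sub>p (mono b *\<^sub>p R)"])
         (use assms in simp_all)
    show ?thesis
      by (rule fin_induct[of Q "\<lambda>Q. (mono a *\<^sub>p Q) *\<^sub>p R = mono a *\<^sub>p (Q *\<^sub>p R)"])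
         (use assms mm in simp_all)
  qed
  show ?thesis
    by (rule fin_induct[of P "\<lambda>P. (P *\<^sub>p Q) *\<^sub>p R = P *\<^sub>p (Q *\<^sub>p R)"])
       (use assms m in simp_all)
qed



lemma lin_expand:
  assumes "finite S" "supp P \<subseteq> S"
  shows "lin f P = (\<lambda>u. \<Sum>w\<in>S. P w * f w u)"
  unfolding lin_def
proof (rule ext, rule sum.mono_neutral_left[OF assms(1) assms(2)])
  fix u show "\<forall>i\<in>S - supp P. P i * f i u = 0" by (auto simp: supp_def)
qed

lemma lin_add[simp]: "fin P \<Longrightarrow> fin Q \<Longrightarrow> lin f (P + Q) = lin f P + lin f Q"
proof -
  assume a: "fin P" "fin Q"
  let ?S = "supp P \<union> supp Q"
  have fS: "finite ?S" using a by (simp add: fin_def)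
  have "supp (P + Q) \<subseteq> ?S" by (auto simp: supp_def)
  then show ?thesis
    using lin_expand[OF fS, of "P+Q" f] lin_expand[OF fS, of P f] lin_expand[OF fS, of Q f]
    by (simp add: fun_eq_iff algebra_simps sum.distrib)
qed

lemma lin_psc[simp]: "fin P \<Longrightarrow> lin f (psc c P) = psc c (lin f P)"
proof -
  assume a: "fin P"
  have fS: "finite (supp P)" using a by (simp add: fin_def)
  have "supp (psc c P) \<subseteq> supp P" by (auto simp: supp_def psc_def)
  then show ?thesis
    using lin_expand[OF fS, of "psc c P" f] lin_expand[OF fS, of P f]
    by (simp add: fun_eq_iff psc_def sum_distrib_left mult.assoc)
qed


lemma mono_same[simp]: "mono w w = 1" by (simp add: mono_def)

lemma lin_mono: "lin f (mono a) = f a"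
  by (simp add: lin_def fun_eq_iff)

lemma lin_0[simp]: "lin f 0 = 0"
  by (simp add: lin_def fun_eq_iff supp_def)

lemma lin_diff[simp]: "fin P \<Longrightarrow> fin Q \<Longrightarrow> lin f (P - Q) = lin f P - lin f Q"
proof -
  assume a: "fin P" "fin Q"
  have "P - Q = P + psc (-1) Q" by (simp add: fun_eq_iff psc_def)
  then have "lin f (P - Q) = lin f (P + psc (-1) Q)" by (rule arg_cong)
  also have "\<dots> = lin f P + psc (-1) (lin f Q)" using a by simp
  finally show ?thesis by (simp add: fun_eq_iff psc_def)
qed

lemma diamond_lin: "diamond s ypoly Q = lin (\<lambda>w. drev s [Y 1] (rev w)) Q"
  by (simp add: diamond_def bilin_def ypoly_def yp_def lin_def diamond_word_def fun_eq_iff)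

definition A1 :: "complex \<Rightarrow> poly" where
  "A1 s = mono [Y 1] - psc (delta s) (mono [Y s])"

lemma pmul_mono_nil1[simp]: "fin P \<Longrightarrow> mono [] *\<^sub>p P = P"
  by (rule fin_induct[of P "\<lambda>P. mono [] *\<^sub>p P = P"]; simp)
lemma pmul_mono_nil2[simp]: "fin P \<Longrightarrow> P *\<^sub>p mono [] = P"
  by (rule fin_induct[of P "\<lambda>P. P *\<^sub>p mono [] = P"]; simp)

lemma lin_uminus[simp]: "fin P \<Longrightarrow> lin f (- P) = - lin f P"
  using lin_diff[of 0 P f] by simp

lemma phi_mono[simp]: "phi (mono a) = phi_word a"
  unfolding phi_def by (rule lin_mono[of phi_word])

lemma psi_mono[simp]: "psi s (mono a) = phi_word (Iw (Mw s a))"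
  unfolding psi_def by (rule lin_mono[of "\<lambda>w. phi_word (Iw (Mw s w))", simplified])

lemma psi_add[simp]: "fin P \<Longrightarrow> fin Q \<Longrightarrow> psi s (P + Q) = psi s P + psi s Q"
  unfolding psi_def by simp
lemma psi_diff[simp]: "fin P \<Longrightarrow> fin Q \<Longrightarrow> psi s (P - Q) = psi s P - psi s Q"
  unfolding psi_def by simp
lemma psi_psc[simp]: "fin P \<Longrightarrow> psi s (psc c P) = psc c (psi s P)"
  unfolding psi_def by simp
lemma psi_uminus[simp]: "fin P \<Longrightarrow> psi s (- P) = - psi s P"
  unfolding psi_def by simp
lemma delta_1[simp]: "delta 1 = 0" by (simp add: delta_def)

lemma fin_phi_letter[simp]: "fin (phi_letter a)"
  by (cases a) (simp_all add: zp_def xp_def yp_def padd_eq psub_eq)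

lemma phi_Y1: "phi (mono [Y 1]) = 0 - mono [Y 1]"
  by (simp add: pone_def yp_def psub_eq delta_def)

lemma phi_X: "phi (mono [X]) = mono [X] + mono [Y 1]"
  by (simp add: pone_def yp_def zp_def xp_def padd_eq)

lemma base_Y: "drev s [Y 1] [] = A1 s"
  by (simp add: phi_Y1 A1_def Iw_def pone_def yp_def psub_eq)

lemma base_X: "drev s [X] [] = zd s"
  by (simp add: phi_X zd_def Iw_def pone_def yp_def xp_def zp_def psub_eq padd_eq)



declare plus_fun_apply[simp del] minus_apply[simp del] uminus_apply[simp del] zero_fun_apply[simp del]

lemma fin_A1[simp]: "fin (A1 s)" by (simp add: A1_def)
lemma fin_zd[simp]: "fin (zd s)" by (simp add: zd_def xp_def yp_def padd_eq)

lemma sum_XY: "drev s [Y 1] r + drev s [X] r = mono (rev r) *\<^sub>p (mono [X] + mono [Y 1])"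
proof (cases r)
  case Nil
  then show ?thesis
    by (simp only: base_X base_Y rev.simps) (simp add: A1_def zd_def xp_def yp_def padd_eq)
next
  case (Cons a r')
  then show ?thesis
    by (cases a) (auto simp: rmul_def padd_eq psub_eq algebra_simps)
qed

fun L :: "letter \<Rightarrow> poly" where
  "L X = mono [X, Y 1]"
| "L (Y b) = mono [Y b, Y 1] - mono [X, Y b] - mono [Y b, Y b]"

fun Fr :: "word \<Rightarrow> poly" where
  "Fr [] = 0"
| "Fr (a # r) = Fr r *\<^sub>p mono [a] + mono (rev r) *\<^sub>p L a"

lemma fin_L[simp]: "fin (L a)" by (cases a) simp_all
lemma fin_Fr[simp]: "fin (Fr r)" by (induction r) simp_all

lemma closed: "drev s [Y 1] r = A1 s *\<^sub>p mono (rev r) + Fr r"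
proof (induction r)
  case Nil
  then show ?case by (simp only: base_Y rev.simps Fr.simps) simp
next
  case (Cons a r)
  show ?case
  proof (cases a)
    case X
    then show ?thesis using Cons
      by (simp add: rmul_def padd_eq psub_eq algebra_simps)
  next
    case (Y b)
    have sx: "drev s [X] r = mono (rev r) *\<^sub>p (mono [X] + mono [Y 1]) - drev s [Y 1] r"
      using sum_XY[of s r] by (simp add: algebra_simps)
    show ?thesis
    proof (cases "b = 1")
      case True
      have sx': "drev s [X] r = mono (rev r) *\<^sub>p (mono [X] + mono [Y 1]) - (A1 s *\<^sub>p mono (rev r) + Fr r)"
        using sx Cons.IH by simp
      show ?thesis using True Y
        by (simp add: sx' rmul_def padd_eq psub_eq algebra_simps)
    next
      case False
      then show ?thesis using Cons Y
        by (simp add: rmul_def padd_eq psub_eq algebra_simps)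
    qed
  qed
qed

definition F :: "word \<Rightarrow> poly" where "F w = Fr (rev w)"

lemma fin_F[simp]: "fin (F w)" by (simp add: F_def)

lemma F_nil[simp]: "F [] = 0" by (simp add: F_def)

lemma F_snoc: "F (w @ [a]) = F w *\<^sub>p mono [a] + mono w *\<^sub>p L a"
  by (simp add: F_def)

lemma F_append[simp]: "F (u @ v) = F u *\<^sub>p mono v + mono u *\<^sub>p F v"
proof (induction v rule: rev_induct)
  case Nil then show ?case by simp
next
  case (snoc a v)
  have "F (u @ v @ [a]) = F (u @ v) *\<^sub>p mono [a] + mono (u @ v) *\<^sub>p L a"
    using F_snoc[of "u @ v" a] by simp
  then show ?case using snoc by (simp add: F_snoc algebra_simps flip: pmul_mono)
qed

lemma F_Cons[simp]: "F (a # w) = L a *\<^sub>p mono w + mono [a] *\<^sub>p F w"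
  using F_append[of "[a]" w] F_snoc[of "[]" a] by simp

lemma D_closed: "drev s [Y 1] (rev w) = A1 s *\<^sub>p mono w + F w"
  by (simp add: closed F_def)



lemma psc_add[simp]: "psc c (P + Q) = psc c P + psc c Q"
  by (simp add: psc_def fun_eq_iff algebra_simps plus_fun_apply)

lemma psc_diff[simp]: "psc c (P - Q) = psc c P - psc c Q"
  by (simp add: psc_def fun_eq_iff algebra_simps minus_apply)

lemma pmul_mono_assoc[simp]: "fin P \<Longrightarrow> mono a *\<^sub>p (mono b *\<^sub>p P) = mono (a @ b) *\<^sub>p P"
  by (simp flip: pmul_assoc)

definition DD :: "complex \<Rightarrow> word \<Rightarrow> poly" where
  "DD s w = A1 s *\<^sub>p mono w + F w"

lemma diamond_eq: "diamond s ypoly Q = lin (DD s) Q"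
proof -
  have "(\<lambda>w. drev s [Y 1] (rev w)) = DD s" by (rule ext) (simp add: D_closed DD_def)
  then show ?thesis by (simp add: diamond_lin)
qed

lemma lin_DD_mono[simp]: "lin (DD s) (mono a) = DD s a"
  by (rule lin_mono)

lemma zd_1: "t = 1 \<Longrightarrow> zd t = mono [X]"
  by (simp add: zd_def xp_def yp_def padd_eq)
lemma zd_n1: "t \<noteq> 1 \<Longrightarrow> zd t = mono [X] + mono [Y t]"
  by (simp add: zd_def xp_def yp_def padd_eq delta_def)
lemma A1_1: "s = 1 \<Longrightarrow> A1 s = mono [Y 1]"
  by (simp add: A1_def)
lemma A1_n1: "s \<noteq> 1 \<Longrightarrow> A1 s = mono [Y 1] - mono [Y s]"
  by (simp add: A1_def delta_def)

lemma mono_case: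
  "lin (DD s) (mono a *\<^sub>p zd t *\<^sub>p mono b) =
     lin (DD s) (mono a) *\<^sub>p zd t *\<^sub>p mono b + mono a *\<^sub>p zd t *\<^sub>p lin (DD s) (mono b)
     + mono a *\<^sub>p zd t *\<^sub>p (zd s - zd t) *\<^sub>p mono b"
proof (cases "t = 1")
  case True
  then show ?thesis
    by (cases "s = 1") (simp_all add: zd_1 zd_n1 A1_1 A1_n1 DD_def algebra_simps)
next
  case False
  then show ?thesis
    by (cases "s = 1") (simp_all add: zd_1 zd_n1 A1_1 A1_n1 DD_def algebra_simps)
qed

definition Lop :: "complex \<Rightarrow> complex \<Rightarrow> poly \<Rightarrow> poly \<Rightarrow> poly" where
  "Lop s t v w = lin (DD s) (v *\<^sub>p zd t *\<^sub>p w)"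
definition Rop :: "complex \<Rightarrow> complex \<Rightarrow> poly \<Rightarrow> poly \<Rightarrow> poly" where
  "Rop s t v w = lin (DD s) v *\<^sub>p zd t *\<^sub>p w + v *\<^sub>p zd t *\<^sub>p lin (DD s) w
     + v *\<^sub>p zd t *\<^sub>p (zd s - zd t) *\<^sub>p w"

lemma psc_pmul_out: "psc c P *\<^sub>p Q = psc c (P *\<^sub>p Q)" by simp

lemma Lop_lin1:
  "fin P \<Longrightarrow> fin Q \<Longrightarrow> fin w \<Longrightarrow> Lop s t (P + psc c Q) w = Lop s t P w + psc c (Lop s t Q w)"
  by (simp add: Lop_def)
lemma Lop_lin2:
  "fin P \<Longrightarrow> fin Q \<Longrightarrow> fin v \<Longrightarrow> Lop s t v (P + psc c Q) = Lop s t v P + psc c (Lop s t v Q)"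
  by (simp add: Lop_def)
lemma Rop_lin1:
  "fin P \<Longrightarrow> fin Q \<Longrightarrow> fin w \<Longrightarrow> Rop s t (P + psc c Q) w = Rop s t P w + psc c (Rop s t Q w)"
  by (simp add: Rop_def algebra_simps)
lemma Rop_lin2:
  "fin P \<Longrightarrow> fin Q \<Longrightarrow> fin v \<Longrightarrow> Rop s t v (P + psc c Q) = Rop s t v P + psc c (Rop s t v Q)"
  by (simp add: Rop_def algebra_simps)
lemma Lop_0: "Lop s t 0 w = 0" "Lop s t v 0 = 0" by (simp_all add: Lop_def)
lemma Rop_0: "Rop s t 0 w = 0" "Rop s t v 0 = 0" by (simp_all add: Rop_def)

lemma LR_mm: "Lop s t (mono a) (mono b) = Rop s t (mono a) (mono b)"
  unfolding Lop_def Rop_def by (rule mono_case)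

lemma LR_mono: "fin w \<Longrightarrow> Lop s t (mono a) w = Rop s t (mono a) w"
  by (rule fin_induct[of w "\<lambda>w. Lop s t (mono a) w = Rop s t (mono a) w"])
     (simp_all add: Lop_0 Rop_0 Lop_lin2 Rop_lin2 LR_mm)

lemma LR: "fin v \<Longrightarrow> fin w \<Longrightarrow> Lop s t v w = Rop s t v w"
  by (rule fin_induct[of v "\<lambda>v. Lop s t v w = Rop s t v w"])
     (simp_all add: Lop_0 Rop_0 Lop_lin1 Rop_lin1 LR_mono)

lemma Ar_fin: "v \<in> Ar r \<Longrightarrow> fin v" by (simp add: Ar_def fin_def)

theorem mainTheorem11:
  fixes r :: nat and s t :: complex and v w :: poly
  assumes "r \<ge> 1"
    and "s \<in> roots_of_unity r" and "t \<in> roots_of_unity r"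
    and "v \<in> Ar r" and "w \<in> Ar r"
  shows "diamond s ypoly (v *\<^sub>p zd t *\<^sub>p w) =
           diamond s ypoly v *\<^sub>p zd t *\<^sub>p w
           +\<^sub>p v *\<^sub>p zd t *\<^sub>p diamond s ypoly w
           +\<^sub>p v *\<^sub>p zd t *\<^sub>p (zd s -\<^sub>p zd t) *\<^sub>p w"
  using LR[OF Ar_fin[OF assms(4)] Ar_fin[OF assms(5)], of s t]
  by (simp only: diamond_eq padd_eq psub_eq Lop_def Rop_def)


end
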